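(* Let $n\geq 1$, let $M$ be a message and $\phi$ a formula, and let $\heartsuit_1,\dots,\heartsuit_n$ be modal prefixes each of which is either $[M]$ or $\langle M\rangle$ (same $M$ throughout). (1) If all $\heartsuit_i$ are $[M]$, then $\vdash(\heartsuit_1\cdots\heartsuit_n\phi)\leftrightarrow[M]\phi$. (2) If at least one $\heartsuit_i$ is $\langle M\rangle$, then $\vdash(\heartsuit_1\cdots\heartsuit_n\phi)\leftrightarrow\langle M\rangle\phi$.
   Context: Fix a finite set $\mathcal{A}$ of agent names containing a distinguished name $\mathsf{CM}$. Messages: $M ::= a \mid B \mid (M,M)$ with $a\in\mathcal{A}$, $B$ optional application-specific data constants, $(M,M')$ pairs. $\mathcal{P}$ is a denumerable set of propositional variables containing atoms $\mathsf{k}_a(M)$ for all $a\in\mathcal{A}$ and messages $M$. Formulas: $\phi ::= P \mid \phi\wedge\phi \mid \phi\vee\phi \mid \neg\phi \mid \phi\to\phi \mid [M]\phi$. Abbreviations: $\mathrm{true}:=\mathsf{k}_{\mathsf{CM}}(\mathsf{CM})$, $\mathrm{false}:=\neg\mathrm{true}$, $\phi\leftrightarrow\psi:=(\phi\to\psi)\wedge(\psi\to\phi)$, $\langle M\rangle\phi:=\neg\neg(\mathsf{k}_{\mathsf{CM}}(M)\wedge\phi)$. LIiP is the smallest set of formulas that contains all instances of: the axioms of an adequate Hilbert axiomatization of intuitionistic propositional logic; $\mathsf{k}_a(a)$; $(\mathsf{k}_a(M)\wedge\mathsf{k}_a(M'))\leftrightarrow\mathsf{k}_a((M,M'))$; $[M]\mathsf{k}_{\mathsf{CM}}(M)$;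 $[M](\phi\to\psi)\to([M]\phi\to[M]\psi)$; $[M]\phi\to(\mathsf{k}_{\mathsf{CM}}(M)\to\phi)$; $[M]\phi\to\langle M\rangle\phi$; $\phi\to[M]\phi$; and is closed under modus ponens and the rule: if $\mathsf{k}_{\mathsf{CM}}(M)\to\mathsf{k}_{\mathsf{CM}}(M')$ is in the set then so is $[M']\phi\to[M]\phi$ for every $\phi$. Write $\vdash\phi$ for $\phi\in\mathrm{LIiP}$. *)

theory Defs
  imports Main
begin

datatype 'a agent = CM | Ag 'a

datatype ('a, 'b) msg = Name "'a agent" | Data 'b | MPair "('a, 'b) msg" "('a, 'b) msg"

text \<open>Formulas. Propositional variables: atoms k_a(M) plus a denumerable
  supply of further variables PV n.\<close>
datatype ('a, 'b) form =
    K "'a agent" "('a, 'b) msg"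
  | PV nat
  | FAnd "('a, 'b) form" "('a, 'b) form"
  | FOr "('a, 'b) form" "('a, 'b) form"
  | FNeg "('a, 'b) form"
  | FImp "('a, 'b) form" "('a, 'b) form"
  | Box "('a, 'b) msg" "('a, 'b) form"

definition FTrue :: "('a, 'b) form" where
  "FTrue = K CM (Name CM)"

definition FFalse :: "('a, 'b) form" where
  "FFalse = FNeg FTrue"

definition FIff :: "('a, 'b) form \<Rightarrow> ('a, 'b) form \<Rightarrow> ('a, 'b) form" where
  "FIff p q = FAnd (FImp p q) (FImp q p)"

definition Dia :: "('a, 'b) msg \<Rightarrow> ('a, 'b) form \<Rightarrow> ('a, 'b) form" where
  "Dia M p = FNeg (FNeg (FAnd (K CM M) p))"

text \<open>LIiP, with a standard Hilbert axiomatization of intuitionistic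
  propositional logic (Kleene's axioms, negation primitive).\<close>
inductive LIiP :: "('a::finite, 'b) form \<Rightarrow> bool" where
  ax1: "LIiP (FImp p (FImp q p))"
| ax2: "LIiP (FImp (FImp p (FImp q r)) (FImp (FImp p q) (FImp p r)))"
| ax3: "LIiP (FImp (FAnd p q) p)"
| ax4: "LIiP (FImp (FAnd p q) q)"
| ax5: "LIiP (FImp p (FImp q (FAnd p q)))"
| ax6: "LIiP (FImp p (FOr p q))"
| ax7: "LIiP (FImp q (FOr p q))"
| ax8: "LIiP (FImp (FImp p r) (FImp (FImp q r) (FImp (FOr p q) r)))"
| ax9: "LIiP (FImp (FImp p q) (FImp (FImp p (FNeg q)) (FNeg p)))"
| ax10: "LIiP (FImp (FNeg p) (FImp p q))"
| kself: "LIiP (K a (Name a))"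
| kpair: "LIiP (FIff (FAnd (K a M) (K a M')) (K a (MPair M M')))"
| boxk: "LIiP (Box M (K CM M))"
| boxK: "LIiP (FImp (Box M (FImp p q)) (FImp (Box M p) (Box M q)))"
| boxT: "LIiP (FImp (Box M p) (FImp (K CM M) p))"
| boxdia: "LIiP (FImp (Box M p) (Dia M p))"
| unit: "LIiP (FImp p (Box M p))"
| mp: "LIiP (FImp p q) \<Longrightarrow> LIiP p \<Longrightarrow> LIiP q"
| mono: "LIiP (FImp (K CM M) (K CM M')) \<Longrightarrow> LIiP (FImp (Box M' p) (Box M p))"

text \<open>Modal prefix: True stands for [M], False for <M>; the list
  [h1,...,hn] applied to p gives h1 ... hn p.\<close>
fun prefix :: "bool list \<Rightarrow> ('a, 'b) msg \<Rightarrow> ('a, 'b) form \<Rightarrow> ('a, 'b) form" where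
  "prefix [] M p = p"
| "prefix (h # hs) M p = (if h then Box M (prefix hs M p) else Dia M (prefix hs M p))"

end

theory Submission
  imports Defs
begin

inductive Der :: "('a::finite, 'b) form set \<Rightarrow> ('a, 'b) form \<Rightarrow> bool" for G where
  Dthm: "LIiP p \<Longrightarrow> Der G p"
| Dhyp: "p \<in> G \<Longrightarrow> Der G p"
| Dmp: "Der G (FImp p q) \<Longrightarrow> Der G p \<Longrightarrow> Der G q"

lemma Lid: "LIiP (FImp p p)"
proof -
  have "LIiP (FImp (FImp p (FImp (FImp p p) p)) (FImp (FImp p (FImp p p)) (FImp p p)))" by (rule ax2)
  then have "LIiP (FImp (FImp p (FImp p p)) (FImp p p))" using ax1 by (rule mp)
  then show ?thesis using ax1 by (rule mp)
qed

lemma deduction: "Der G' b \<Longrightarrow> G' = insert a G \<Longrightarrow> Der G (FImp a b)"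
proof (induction rule: Der.induct)
  case (Dthm p)
  then show ?case by (meson Der.Dthm Der.Dmp ax1)
next
  case (Dhyp p)
  then show ?case by (metis Der.Dthm Der.Dhyp Der.Dmp Lid ax1 insert_iff)
next
  case (Dmp p q)
  then show ?case by (meson Der.Dthm Der.Dmp ax2)
qed

lemma impI: "Der (insert a G) b \<Longrightarrow> Der G (FImp a b)"
  using deduction by blast

lemma Der_empty: "Der G p \<Longrightarrow> G = {} \<Longrightarrow> LIiP p"
  by (induction rule: Der.induct) (auto intro: mp)

lemma toL: "Der {} (FImp a b) \<Longrightarrow> LIiP (FImp a b)"
  using Der_empty by blast

lemma impE: "Der G (FImp a b) \<Longrightarrow> Der G a \<Longrightarrow> Der G b"
  by (rule Dmp)

lemma conjI: "Der G a \<Longrightarrow> Der G b \<Longrightarrow> Der G (FAnd a b)"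
  by (meson Dmp Dthm ax5)
lemma conjE1: "Der G (FAnd a b) \<Longrightarrow> Der G a"
  by (meson Dmp Dthm ax3)
lemma conjE2: "Der G (FAnd a b) \<Longrightarrow> Der G b"
  by (meson Dmp Dthm ax4)
lemma notI: "Der (insert a G) b \<Longrightarrow> Der (insert a G) (FNeg b) \<Longrightarrow> Der G (FNeg a)"
  by (meson Dmp Dthm ax9 impI)

lemma hyp1: "Der (insert a G) a" by (simp add: Dhyp)
lemma hyp2: "Der (insert b (insert a G)) a" by (simp add: Dhyp)
lemma hyp3: "Der (insert c (insert b (insert a G))) a" by (simp add: Dhyp)

lemma nn_mono: "LIiP (FImp p q) \<Longrightarrow> LIiP (FImp (FNeg (FNeg p)) (FNeg (FNeg q)))"
  apply (rule toL, rule impI, rule notI[where b="FNeg p"])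
   apply (rule notI[where b=q])
    apply (rule impE[OF Dthm], assumption, rule hyp1)
   apply (rule hyp2)
  apply (rule hyp2)
  done

lemma nn_collapse: "LIiP (FImp (FNeg (FNeg (FAnd k (FNeg (FNeg b))))) (FNeg (FNeg b)))"
  apply (rule toL, rule impI, rule notI[where b="FNeg (FAnd k (FNeg (FNeg b)))"])
   apply (rule notI[where b="FNeg b"])
    apply (rule hyp2)
   apply (rule conjE2, rule hyp1)
  apply (rule hyp2)
  done

lemma iffI': "LIiP (FImp p q) \<Longrightarrow> LIiP (FImp q p) \<Longrightarrow> LIiP (FIff p q)"
  unfolding FIff_def by (meson ax5 mp)
lemma iffD1: "LIiP (FIff p q) \<Longrightarrow> LIiP (FImp p q)"
  unfolding FIff_def by (meson ax3 mp)
lemma iffD2: "LIiP (FIff p q) \<Longrightarrow> LIiP (FImp q p)"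
  unfolding FIff_def by (meson ax4 mp)
lemma imp_trans: "LIiP (FImp p q) \<Longrightarrow> LIiP (FImp q r) \<Longrightarrow> LIiP (FImp p r)"
  apply (rule toL, rule impI)
  apply (rule impE[OF Dthm], assumption)
  apply (rule impE[OF Dthm], assumption, rule hyp1)
  done
lemma iff_trans: "LIiP (FIff p q) \<Longrightarrow> LIiP (FIff q r) \<Longrightarrow> LIiP (FIff p r)"
  by (meson iffD1 iffD2 iffI' imp_trans)
lemma iff_refl: "LIiP (FIff p p)"
  by (simp add: Lid iffI')

lemma nec: "LIiP p \<Longrightarrow> LIiP (Box M p)"
  by (meson mp unit)
lemma box_mono: "LIiP (FImp p q) \<Longrightarrow> LIiP (FImp (Box M p) (Box M q))"
  by (meson boxK mp nec)
lemma box_cong: "LIiP (FIff p q) \<Longrightarrow> LIiP (FIff (Box M p) (Box M q))"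
  by (meson box_mono iffD1 iffD2 iffI')

lemma conj_mono2: "LIiP (FImp p q) \<Longrightarrow> LIiP (FImp (FAnd k p) (FAnd k q))"
  apply (rule toL, rule impI, rule conjI)
   apply (rule conjE1, rule hyp1)
  apply (rule impE[OF Dthm], assumption, rule conjE2, rule hyp1)
  done

lemma dia_mono: "LIiP (FImp p q) \<Longrightarrow> LIiP (FImp (Dia M p) (Dia M q))"
  unfolding Dia_def by (intro nn_mono conj_mono2)
lemma dia_cong: "LIiP (FIff p q) \<Longrightarrow> LIiP (FIff (Dia M p) (Dia M q))"
  by (meson dia_mono iffD1 iffD2 iffI')

lemma box_box: "LIiP (FIff (Box M (Box M \<phi>)) (Box M \<phi>))"
proof (rule iffI'[OF _ unit])
  have 1: "LIiP (FImp (Box M (Box M \<phi>)) (Box M (FImp (K CM M) \<phi>)))"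
    by (rule box_mono[OF boxT])
  show "LIiP (FImp (Box M (Box M \<phi>)) (Box M \<phi>))"
    apply (rule toL, rule impI)
    apply (rule impE[OF impE[OF Dthm[OF boxK]]])
     apply (rule impE[OF Dthm[OF 1]], rule hyp1)
    apply (rule Dthm[OF boxk])
    done
qed

lemma box_dia: "LIiP (FIff (Box M (Dia M \<phi>)) (Dia M \<phi>))"
proof (rule iffI'[OF _ unit])
  show "LIiP (FImp (Box M (Dia M \<phi>)) (Dia M \<phi>))"
    using boxdia nn_collapse imp_trans unfolding Dia_def by blast
qed

lemma dia_dia: "LIiP (FIff (Dia M (Dia M \<phi>)) (Dia M \<phi>))"
proof (rule iffI')
  show "LIiP (FImp (Dia M (Dia M \<phi>)) (Dia M \<phi>))"
    unfolding Dia_def by (rule nn_collapse)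
  have H: "LIiP (FImp (FAnd (K CM M) \<phi>) (FAnd (K CM M) (Dia M \<phi>)))"
    unfolding Dia_def
    apply (rule toL, rule impI, rule conjI)
     apply (rule conjE1, rule hyp1)
    apply (rule notI[where b="FAnd (K CM M) \<phi>"])
     apply (rule hyp2)
    apply (rule hyp1)
    done
  then show "LIiP (FImp (Dia M \<phi>) (Dia M (Dia M \<phi>)))"
    using nn_mono[OF H] by (simp add: Dia_def)
qed

lemma dia_box: "LIiP (FIff (Dia M (Box M \<phi>)) (Dia M \<phi>))"
proof (rule iffI')
  have "LIiP (FImp (FAnd (K CM M) (Box M \<phi>)) (FAnd (K CM M) \<phi>))"
    apply (rule toL, rule impI, rule conjI)
     apply (rule conjE1, rule hyp1)
    apply (rule impE[OF impE[OF Dthm[OF boxT]]])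
     apply (rule conjE2, rule hyp1)
    apply (rule conjE1, rule hyp1)
    done
  then show "LIiP (FImp (Dia M (Box M \<phi>)) (Dia M \<phi>))"
    unfolding Dia_def by (rule nn_mono)
  show "LIiP (FImp (Dia M \<phi>) (Dia M (Box M \<phi>)))"
    unfolding Dia_def by (intro nn_mono conj_mono2 unit)
qed

lemma main: "hs \<noteq> [] \<Longrightarrow> ((\<forall>h\<in>set hs. h) \<longrightarrow> LIiP (FIff (prefix hs M \<phi>) (Box M \<phi>)))
       \<and> ((\<exists>h\<in>set hs. \<not> h) \<longrightarrow> LIiP (FIff (prefix hs M \<phi>) (Dia M \<phi>)))"
proof (induction hs)
  case Nil
  then show ?case by simp
next
  case (Cons h t)
  show ?case
  proof (cases "t = []")
    case True
    then show ?thesis by (simp add: iff_refl)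
  next
    case False
    with Cons.IH have IH: "((\<forall>h\<in>set t. h) \<longrightarrow> LIiP (FIff (prefix t M \<phi>) (Box M \<phi>)))
       \<and> ((\<exists>h\<in>set t. \<not> h) \<longrightarrow> LIiP (FIff (prefix t M \<phi>) (Dia M \<phi>)))" by blast
    show ?thesis
    proof (cases "\<forall>h\<in>set t. h")
      case True
      then have I: "LIiP (FIff (prefix t M \<phi>) (Box M \<phi>))" using IH by blast
      show ?thesis using True
        by (auto intro: iff_trans[OF box_cong[OF I] box_box] iff_trans[OF dia_cong[OF I] dia_box])
    next
      case F: False
      then have I: "LIiP (FIff (prefix t M \<phi>) (Dia M \<phi>))" using IH by blast
      show ?thesis using F
        by (auto intro: iff_trans[OF box_cong[OF I] box_dia] iff_trans[OF dia_cong[OF I] dia_dia])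
    qed
  qed
qed

theorem corollary3:
  fixes hs :: "bool list" and M :: "('a::finite, 'b) msg" and \<phi> :: "('a, 'b) form"
  assumes "length hs \<ge> 1"
  shows "((\<forall>h\<in>set hs. h) \<longrightarrow> LIiP (FIff (prefix hs M \<phi>) (Box M \<phi>)))
       \<and> ((\<exists>h\<in>set hs. \<not> h) \<longrightarrow> LIiP (FIff (prefix hs M \<phi>) (Dia M \<phi>)))"
  using main[of hs M \<phi>] assms by (cases hs) auto

end
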